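(* Let $\ell:\mathcal{R}\to\mathbb{R}^{\mathcal{Y}}_+$ be a discrete loss, $L:\mathbb{R}^d\to\mathbb{R}^{\mathcal{Y}}_+$ a polyhedral loss, and $\psi:\mathbb{R}^d\to\mathcal{R}$ a link such that $(L,\psi)$ is consistent for $\ell$. Then there exists $c>0$ such that for all hypotheses $h:\mathcal{X}\to\mathbb{R}^d$ and all data distributions $\mathcal{D}$ on $\mathcal{X}\times\mathcal{Y}$, $R_\ell(\psi\circ h;\mathcal{D})\le c\cdot R_L(h;\mathcal{D})$.
   Context: $\mathcal{Y}$ is a finite label set and $\mathcal{X}$ a feature space; $\mathbb{R}^{\mathcal{Y}}_+$ is the nonnegative orthant. A loss $L:\mathcal{R}\to\mathbb{R}^{\mathcal{Y}}_+$ assigns a loss $L(r)_y$ to report $r$ and label $y$; it is discrete if $\mathcal{R}$ is finite; $L:\mathbb{R}^d\to\mathbb{R}^{\mathcal{Y}}_+$ is polyhedral if each $u\mapsto L(u)_y$ is a pointwise maximum of finitely many affine functions. Regrets: $R_L(h;\mathcal{D})=\mathbb{E}_{(X,Y)\sim\mathcal{D}}L(h(X))_Y-\inf_{h'}\mathbb{E}_{\mathcal{D}}L(h'(X))_Y$ and $R_\ell(g;\mathcal{D})=\mathbb{E}_{\mathcal{D}}\ell(g(X))_Y-\inf_{g'}\mathbb{E}_{\mathcal{D}}\ell(g'(X))_Y$, infima over all measurable $h':\mathcal{X}\to\mathbb{R}^d$, $g':\mathcal{X}\to\mathcal{R}$; hypotheses are measurable. $(L,\psi)$ is consistent for $\ell$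 if for every distribution $\mathcal{D}$ on $\mathcal{X}\times\mathcal{Y}$ and every sequence of hypotheses $h_1,h_2,\dots$ with $R_L(h_i;\mathcal{D})\to0$, we have $R_\ell(\psi\circ h_i;\mathcal{D})\to0$. *)

theory Defs
  imports "HOL-Probability.Probability"
begin

definition nonneg_loss :: "('r \<Rightarrow> 'y \<Rightarrow> real) \<Rightarrow> bool" where
  "nonneg_loss L \<longleftrightarrow> (\<forall>r y. 0 \<le> L r y)"

definition polyhedral_loss :: "('a::euclidean_space \<Rightarrow> 'y \<Rightarrow> real) \<Rightarrow> bool" where
  "polyhedral_loss L \<longleftrightarrow>
     (\<forall>y. \<exists>A :: ('a \<times> real) set. finite A \<and> A \<noteq> {} \<and>
        (\<forall>u. L u y = Max ((\<lambda>(a, b). a \<bullet> u + b) ` A)))"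

definition data_dist :: "'x measure \<Rightarrow> ('x \<times> 'y) measure \<Rightarrow> bool" where
  "data_dist MX D \<longleftrightarrow> prob_space D \<and> sets D = sets (MX \<Otimes>\<^sub>M count_space (UNIV :: 'y set))"

definition exp_loss :: "('r \<Rightarrow> 'y \<Rightarrow> real) \<Rightarrow> ('x \<times> 'y) measure \<Rightarrow> ('x \<Rightarrow> 'r) \<Rightarrow> ennreal" where
  "exp_loss L D h = (\<integral>\<^sup>+ z. ennreal (L (h (fst z)) (snd z)) \<partial>D)"

definition regret :: "'x measure \<Rightarrow> 'r measure \<Rightarrow> ('r \<Rightarrow> 'y \<Rightarrow> real)
    \<Rightarrow> ('x \<times> 'y) measure \<Rightarrow> ('x \<Rightarrow> 'r) \<Rightarrow> ennreal" where
  "regret MX MR L D h = exp_loss L D h - (INF h' \<in> measurable MX MR. exp_loss L D h')"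

definition consistent ::
  "'x measure \<Rightarrow> ('a::euclidean_space \<Rightarrow> 'y \<Rightarrow> real) \<Rightarrow> ('a \<Rightarrow> 'r) \<Rightarrow> ('r \<Rightarrow> 'y \<Rightarrow> real) \<Rightarrow> bool" where
  "consistent MX L \<psi> ell \<longleftrightarrow>
     (\<forall>D. data_dist MX D \<longrightarrow>
        (\<forall>hs :: nat \<Rightarrow> 'x \<Rightarrow> 'a. (\<forall>i. hs i \<in> borel_measurable MX) \<longrightarrow>
           ((\<lambda>i. regret MX borel L D (hs i)) \<longlonglongrightarrow> 0) \<longrightarrow>
           ((\<lambda>i. regret MX (count_space UNIV) ell D (\<psi> \<circ> hs i)) \<longlonglongrightarrow> 0)))"

end

theory Submission
  imports Defs
begin
definition actset :: "('y \<Rightarrow> ('a::euclidean_space \<times> real) set) \<Rightarrow> ('a \<Rightarrow> 'y \<Rightarrow> real) \<Rightarrow> 'a \<Rightarrow> ('y \<times> ('a \<times> real)) set" where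
  "actset A L u = {(y, ab). ab \<in> A y \<and> fst ab \<bullet> u + snd ab = L u y}"

definition Sset :: "('y \<Rightarrow> ('a::euclidean_space \<times> real) set) \<Rightarrow> ('a \<Rightarrow> 'y \<Rightarrow> real) \<Rightarrow> 'a set" where
  "Sset A L = (\<lambda>T. SOME v. actset A L v = T) ` range (actset A L)"

lemma Sset_finite:
  fixes A :: "'y::finite \<Rightarrow> ('a::euclidean_space \<times> real) set"
  assumes fin: "\<And>y. finite (A y)"
  shows "finite (Sset A L)"
proof -
  have "range (actset A L) \<subseteq> Pow (Sigma UNIV A)"
    unfolding actset_def by auto
  moreover have "finite (Pow (Sigma UNIV A))" using fin by auto
  ultimately show ?thesis unfolding Sset_def by (metis finite_imageI finite_subset)
qed

lemma Sset_ne: "Sset A L \<noteq> {}"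
  unfolding Sset_def by auto

lemma move_formula:
  fixes A :: "'y \<Rightarrow> ('a::euclidean_space \<times> real) set"
  assumes fin: "finite (A y)"
    and Ldef: "\<And>u. L u y = Max ((\<lambda>(a,b). a \<bullet> u + b) ` A y)"
    and ab: "(\<alpha>, \<beta>) \<in> A y" "\<alpha> \<bullet> u + \<beta> = L u y"
    and cond: "\<And>a b. (a,b) \<in> A y \<Longrightarrow> t * ((a - \<alpha>) \<bullet> d) \<le> L u y - (a \<bullet> u + b)"
  shows "L (u + t *\<^sub>R d) y = L u y + t * (\<alpha> \<bullet> d)"
proof -
  have "Max ((\<lambda>(a,b). a \<bullet> (u + t *\<^sub>R d) + b) ` A y) = L u y + t * (\<alpha> \<bullet> d)"
  proof (rule Max_eqI)
    show "finite ((\<lambda>(a,b). a \<bullet> (u + t *\<^sub>R d) + b) ` A y)" using fin by simp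
  next
    fix z assume "z \<in> (\<lambda>(a,b). a \<bullet> (u + t *\<^sub>R d) + b) ` A y"
    then obtain a b where z: "(a,b) \<in> A y" "z = a \<bullet> (u + t *\<^sub>R d) + b" by auto
    have "t * ((a - \<alpha>) \<bullet> d) \<le> L u y - (a \<bullet> u + b)" using cond z(1) .
    then show "z \<le> L u y + t * (\<alpha> \<bullet> d)" using z(2)
      by (simp add: inner_add_right inner_diff_left algebra_simps)
  next
    show "L u y + t * (\<alpha> \<bullet> d) \<in> (\<lambda>(a,b). a \<bullet> (u + t *\<^sub>R d) + b) ` A y"
      using ab by (force simp: inner_add_right algebra_simps intro!: image_eqI[where x="(\<alpha>,\<beta>)"])
  qed
  then show ?thesis using Ldef by simp
qed

lemma descent:
  fixes A :: "'y::finite \<Rightarrow> ('a::euclidean_space \<times> real) set"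
    and L :: "'a \<Rightarrow> 'y \<Rightarrow> real" and w :: "'y \<Rightarrow> real"
  assumes fin: "\<And>y. finite (A y)" and ne: "\<And>y. A y \<noteq> {}"
    and Ldef: "\<And>u y. L u y = Max ((\<lambda>(a,b). a \<bullet> u + b) ` A y)"
    and nn: "\<And>u y. 0 \<le> L u y" and w: "\<And>y. 0 \<le> w y"
  shows "\<exists>s \<in> Sset A L. (\<Sum>y\<in>UNIV. w y * L s y) \<le> (\<Sum>y\<in>UNIV. w y * L u y)"
proof (induction "card (Sigma UNIV A - actset A L u)" arbitrary: u rule: less_induct)
  case less
  have le_max: "a \<bullet> v + b \<le> L v y" if "(a,b) \<in> A y" for a b v y
    unfolding Ldef using fin that by (intro Max_ge) force+
  have "\<forall>y. \<exists>ab. ab \<in> A y \<and> fst ab \<bullet> u + snd ab = L u y"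
  proof
    fix y
    have "L u y \<in> (\<lambda>(a,b). a \<bullet> u + b) ` A y" unfolding Ldef using fin ne by (intro Max_in) auto
    then show "\<exists>ab. ab \<in> A y \<and> fst ab \<bullet> u + snd ab = L u y" by force
  qed
  then obtain AB where AB: "\<And>y. AB y \<in> A y \<and> fst (AB y) \<bullet> u + snd (AB y) = L u y" by metis
  define \<alpha> where "\<alpha> y = fst (AB y)" for y
  define \<beta> where "\<beta> y = snd (AB y)" for y
  have ab: "(\<alpha> y, \<beta> y) \<in> A y" "\<alpha> y \<bullet> u + \<beta> y = L u y" for y
    using AB[of y] by (auto simp: \<alpha>_def \<beta>_def)
  define T where "T = actset A L u"
  define Dd where "Dd d \<longleftrightarrow> (\<forall>y a b. (y,(a,b)) \<in> T \<longrightarrow> a \<bullet> d = \<alpha> y \<bullet> d)" for d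
  define g where "g d = (\<Sum>y\<in>UNIV. w y * (\<alpha> y \<bullet> d))" for d
  define Lw where "Lw v = (\<Sum>y\<in>UNIV. w y * L v y)" for v
  have Lw_nn: "0 \<le> Lw v" for v unfolding Lw_def using w nn by (intro sum_nonneg) auto
  have Dd_neg: "Dd (- d)" if "Dd d" for d using that unfolding Dd_def by auto
  have g_neg: "g (- d) = - g d" for d unfolding g_def by (simp add: sum_negf)
  have Lw_move: "Lw (u + t *\<^sub>R d) = Lw u + t * g d"
    if cond: "\<And>y a b. (a,b) \<in> A y \<Longrightarrow> t * ((a - \<alpha> y) \<bullet> d) \<le> L u y - (a \<bullet> u + b)" for t d
  proof -
    have "L (u + t *\<^sub>R d) y = L u y + t * (\<alpha> y \<bullet> d)" for y
      by (rule move_formula[where y=y, OF fin Ldef ab cond])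
    then show ?thesis unfolding Lw_def g_def
      by (simp add: algebra_simps sum.distrib sum_distrib_left)
  qed
  have finI: "finite (Sigma UNIV A)" using fin by auto
  have key_move: "\<exists>s \<in> Sset A L. Lw s \<le> Lw u"
    if Dd: "Dd d" and gd: "g d \<le> 0" and pos: "\<exists>y a b. (a,b) \<in> A y \<and> (a - \<alpha> y) \<bullet> d > 0" for d
  proof -
    define J where "J = {(y, ab). ab \<in> A y \<and> (fst ab - \<alpha> y) \<bullet> d > 0}"
    define rat where "rat j = (L u (fst j) - (fst (snd j) \<bullet> u + snd (snd j))) / ((fst (snd j) - \<alpha> (fst j)) \<bullet> d)" for j
    have finJ: "finite J" using finI unfolding J_def by (rule rev_finite_subset) auto
    have neJ: "J \<noteq> {}" using pos unfolding J_def by auto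
    define t where "t = Min (rat ` J)"
    obtain j0 where j0: "j0 \<in> J" "rat j0 = t" unfolding t_def using finJ neJ
      by (metis (no_types, opaque_lifting) Min_in empty_is_image finite_imageI imageE)
    have rat_nn: "0 \<le> rat j" if "j \<in> J" for j
      using that le_max[where a="fst (snd j)" and b="snd (snd j)" and v=u and y="fst j"] unfolding J_def rat_def
      by (auto intro!: divide_nonneg_pos)
    have t_nn: "0 \<le> t" using rat_nn[OF j0(1)] j0(2) by simp
    have cond: "t * ((a - \<alpha> y) \<bullet> d) \<le> L u y - (a \<bullet> u + b)" if "(a,b) \<in> A y" for y a b
    proof (cases "(a - \<alpha> y) \<bullet> d > 0")
      case True
      then have "(y,(a,b)) \<in> J" using that unfolding J_def by auto
      then have "t \<le> rat (y,(a,b))" unfolding t_def using finJ by simp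
      then show ?thesis using True unfolding rat_def by (simp add: pos_le_divide_eq)
    next
      case False
      then have "t * ((a - \<alpha> y) \<bullet> d) \<le> 0" using t_nn by (simp add: mult_nonneg_nonpos)
      also have "0 \<le> L u y - (a \<bullet> u + b)" using le_max[OF that] by simp
      finally show ?thesis .
    qed
    define u' where "u' = u + t *\<^sub>R d"
    have Lu': "L u' y = L u y + t * (\<alpha> y \<bullet> d)" for y
      unfolding u'_def by (rule move_formula[where y=y, OF fin Ldef ab cond])
    have Lw': "Lw u' \<le> Lw u" unfolding u'_def using Lw_move[OF cond] gd t_nn
      by (simp add: mult_nonneg_nonpos)
    have sub: "actset A L u \<subseteq> actset A L u'"
    proof
      fix j assume j: "j \<in> actset A L u"
      then obtain y a b where jj: "j = (y,(a,b))" by (metis prod.exhaust)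
      have "a \<bullet> d = \<alpha> y \<bullet> d" using Dd j jj unfolding Dd_def T_def by auto
      then show "j \<in> actset A L u'" using j jj Lu'[of y] unfolding actset_def u'_def
        by (auto simp: inner_add_right algebra_simps)
    qed
    obtain y0 a0 b0 where jj0: "j0 = (y0,(a0,b0))" by (metis prod.exhaust)
    have j0A: "(a0,b0) \<in> A y0" and j0p: "(a0 - \<alpha> y0) \<bullet> d > 0" using j0(1) jj0 unfolding J_def by auto
    have "t * ((a0 - \<alpha> y0) \<bullet> d) = L u y0 - (a0 \<bullet> u + b0)"
      using j0(2) j0p jj0 unfolding rat_def by (auto simp: field_simps)
    then have in': "j0 \<in> actset A L u'" using j0A Lu'[of y0] jj0 unfolding actset_def u'_def
      by (auto simp: inner_add_right inner_diff_left algebra_simps)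
    have notin: "j0 \<notin> actset A L u"
    proof
      assume "j0 \<in> actset A L u"
      then have "a0 \<bullet> d = \<alpha> y0 \<bullet> d" using Dd jj0 unfolding Dd_def T_def by auto
      then show False using j0p by (simp add: inner_diff_left)
    qed
    have actI: "actset A L v \<subseteq> Sigma UNIV A" for v unfolding actset_def by auto
    have "Sigma UNIV A - actset A L u' \<subset> Sigma UNIV A - actset A L u"
      using sub in' notin actI by blast
    then have "card (Sigma UNIV A - actset A L u') < card (Sigma UNIV A - actset A L u)"
      using finI by (intro psubset_card_mono) auto
    from less(1)[OF this] obtain s where "s \<in> Sset A L" "Lw s \<le> Lw u'" unfolding Lw_def by blast
    then show ?thesis using Lw' by (meson order_trans)
  qed
  have terminal: "\<exists>s \<in> Sset A L. Lw s \<le> Lw u"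
    if lin: "\<And>d y a b. Dd d \<Longrightarrow> (a,b) \<in> A y \<Longrightarrow> (a - \<alpha> y) \<bullet> d = 0"
  proof -
    define s where "s = (SOME v. actset A L v = T)"
    have acts: "actset A L s = T" unfolding s_def T_def by (rule someI) simp
    have sS: "s \<in> Sset A L" unfolding Sset_def s_def T_def by auto
    define d where "d = s - u"
    have Ddd: "Dd d" unfolding Dd_def
    proof (intro allI impI)
      fix y a b assume yab: "(y, a, b) \<in> T"
      have "(y, \<alpha> y, \<beta> y) \<in> T" using ab unfolding T_def actset_def by auto
      then have "\<alpha> y \<bullet> s + \<beta> y = L s y" using acts unfolding actset_def by auto
      moreover have "a \<bullet> s + b = L s y" using yab acts unfolding actset_def by auto
      moreover have "a \<bullet> u + b = L u y" using yab unfolding T_def actset_def by auto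
      ultimately show "a \<bullet> d = \<alpha> y \<bullet> d" using ab(2)[of y] unfolding d_def
        by (simp add: inner_diff_right)
    qed
    have line: "L (u + t *\<^sub>R d) y = L u y + t * (\<alpha> y \<bullet> d)" for t y
    proof -
      have "Dd (t *\<^sub>R d)" using Ddd unfolding Dd_def by auto
      then have z: "(a - \<alpha> y) \<bullet> (t *\<^sub>R d) = 0" if "(a,b) \<in> A y" for a b using lin that by blast
      have "L (u + 1 *\<^sub>R (t *\<^sub>R d)) y = L u y + 1 * (\<alpha> y \<bullet> (t *\<^sub>R d))"
        by (rule move_formula[where y=y, OF fin Ldef ab]) (use z le_max[where v=u and y=y] in fastforce)
      then show ?thesis by simp
    qed
    have zero: "\<alpha> y \<bullet> d = 0" for y
    proof (rule ccontr)
      assume nz: "\<alpha> y \<bullet> d \<noteq> 0"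
      have "0 \<le> L (u + (- (L u y + 1) / (\<alpha> y \<bullet> d)) *\<^sub>R d) y" by (rule nn)
      also have "\<dots> = -1" using nz by (simp add: line)
      finally show False by simp
    qed
    have "L s y = L u y" for y using line[of 1 y] zero[of y] unfolding d_def by simp
    then show ?thesis using sS unfolding Lw_def by (intro bexI[OF _ sS]) simp
  qed
  show ?case
  proof (cases "\<exists>d. Dd d \<and> g d \<le> 0 \<and> (\<exists>y a b. (a,b) \<in> A y \<and> (a - \<alpha> y) \<bullet> d > 0)")
    case True
    then show ?thesis using key_move unfolding Lw_def by blast
  next
    case False
    have gnn: "0 \<le> g d" if "Dd d" for d
    proof (rule ccontr)
      assume neg: "\<not> 0 \<le> g d"
      then have np: "\<And>y a b. (a,b) \<in> A y \<Longrightarrow> (a - \<alpha> y) \<bullet> d \<le> 0" using False that by (metis linorder_not_le order_less_imp_le)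
      have cond: "t * ((a - \<alpha> y) \<bullet> d) \<le> L u y - (a \<bullet> u + b)" if "(a,b) \<in> A y" "0 \<le> t" for t y a b
      proof -
        have "t * ((a - \<alpha> y) \<bullet> d) \<le> 0" using np[OF that(1)] that(2) by (simp add: mult_nonneg_nonpos)
        also have "0 \<le> L u y - (a \<bullet> u + b)" using le_max[OF that(1)] by simp
        finally show ?thesis .
      qed
      define t where "t = (Lw u + 1) / (- g d)"
      have tnn: "0 \<le> t" unfolding t_def using neg Lw_nn[of u] by (intro divide_nonneg_pos) auto
      have "0 \<le> Lw (u + t *\<^sub>R d)" by (rule Lw_nn)
      also have "\<dots> = Lw u + t * g d" using cond tnn by (intro Lw_move) auto
      also have "\<dots> = -1" unfolding t_def using neg by (simp add: field_simps)
      finally show False by simp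
    qed
    have g0: "g d = 0" if "Dd d" for d using gnn[OF that] gnn[OF Dd_neg[OF that]] g_neg[of d] by simp
    have "(a - \<alpha> y) \<bullet> d = 0" if "Dd d" "(a,b) \<in> A y" for d y a b
    proof -
      have "\<not> (a - \<alpha> y) \<bullet> d > 0" using False that g0 by force
      moreover have "\<not> (a - \<alpha> y) \<bullet> (- d) > 0" using False that g0 Dd_neg by force
      ultimately show ?thesis by simp
    qed
    then show ?thesis using terminal unfolding Lw_def by blast
  qed
qed

lemma cell_polytope:
  fixes c :: "'k \<Rightarrow> 'y::finite \<Rightarrow> real" and K :: "'k set"
  assumes finK: "finite K"
  shows "\<exists>V. finite V \<and> {p::real^'y. (\<forall>y. 0 \<le> p$y) \<and> (\<Sum>y\<in>UNIV. p$y) = 1 \<and> (\<forall>k\<in>K. (\<Sum>y\<in>UNIV. p$y * c k y) \<le> 0)} = convex hull V"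
proof -
  define P where "P = {p::real^'y. (\<forall>y. 0 \<le> p$y) \<and> (\<Sum>y\<in>UNIV. p$y) = 1 \<and> (\<forall>k\<in>K. (\<Sum>y\<in>UNIV. p$y * c k y) \<le> 0)}"
  have eq: "P = (\<Inter>y. {p. (- axis y 1) \<bullet> p \<le> (0::real)}) \<inter> {p. (\<chi> i. 1) \<bullet> p = 1}
      \<inter> (\<Inter>k\<in>K. {p. (\<chi> i. c k i) \<bullet> p \<le> 0})"
  proof -
    have h1: "{p. (- axis y 1) \<bullet> p \<le> (0::real)} = {p::real^'y. 0 \<le> p$y}" for y
      by (auto simp: inner_axis')
    have h2: "(\<chi> i. 1) \<bullet> p = (\<Sum>y\<in>UNIV. p$y)" for p :: "real^'y"
      by (simp add: inner_vec_def)
    have h3: "(\<chi> i. c k i) \<bullet> p = (\<Sum>y\<in>UNIV. p$y * c k y)" for p :: "real^'y" and k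
      by (simp add: inner_vec_def mult.commute)
    show ?thesis unfolding h1 h2 h3 P_def by auto
  qed
  have "polyhedron P" unfolding eq using finK
    by (intro polyhedron_Int polyhedron_Inter) (auto intro: polyhedron_halfspace_le polyhedron_halfspace_ge polyhedron_hyperplane)
  moreover have "bounded P"
  proof -
    have "norm p \<le> 1" if "p \<in> P" for p
    proof -
      have "norm p \<le> (\<Sum>i\<in>UNIV. \<bar>p$i\<bar>)" by (rule norm_le_l1_cart)
      also have "\<dots> = 1" using that unfolding P_def by auto
      finally show ?thesis .
    qed
    then show ?thesis unfolding bounded_iff by blast
  qed
  ultimately have "polytope P" by (simp add: polytope_eq_bounded_polyhedron)
  then show ?thesis unfolding polytope_def P_def by blast
qed

definition wsum :: "('y::finite \<Rightarrow> real) \<Rightarrow> ('y \<Rightarrow> real) \<Rightarrow> real" where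
  "wsum p v = (\<Sum>y\<in>UNIV. p y * v y)"

definition psimplex :: "('y::finite \<Rightarrow> real) set" where
  "psimplex = {p. (\<forall>y. 0 \<le> p y) \<and> sum p UNIV = 1}"

definition minover :: "'b set \<Rightarrow> ('b \<Rightarrow> 'y::finite \<Rightarrow> real) \<Rightarrow> ('y \<Rightarrow> real) \<Rightarrow> real" where
  "minover X F p = Min ((\<lambda>x. wsum p (F x)) ` X)"

lemma minover_le: "finite X \<Longrightarrow> x \<in> X \<Longrightarrow> minover X F p \<le> wsum p (F x)"
  unfolding minover_def by (rule Min_le) auto

lemma minover_ex: "finite X \<Longrightarrow> X \<noteq> {} \<Longrightarrow> \<exists>x\<in>X. minover X F p = wsum p (F x)"
proof -
  assume "finite X" "X \<noteq> {}"
  then have "Min ((\<lambda>x. wsum p (F x)) ` X) \<in> (\<lambda>x. wsum p (F x)) ` X" by (intro Min_in) auto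
  then show ?thesis unfolding minover_def by auto
qed

lemma wsum_comb: "wsum (\<lambda>i. a * x i + b * y i) v = a * wsum x v + b * wsum y v"
  unfolding wsum_def by (simp add: algebra_simps sum.distrib sum_distrib_left)

lemma minover_concave:
  assumes "finite X" "X \<noteq> {}" "0 \<le> a" "0 \<le> b"
  shows "a * minover X F x + b * minover X F y \<le> minover X F (\<lambda>i. a * x i + b * y i)"
proof -
  have "a * minover X F x + b * minover X F y \<le> wsum (\<lambda>i. a * x i + b * y i) (F z)" if "z \<in> X" for z
    unfolding wsum_comb using assms minover_le[OF assms(1) that]
    by (intro add_mono mult_left_mono) auto
  then show ?thesis unfolding minover_def using assms by (subst Min_ge_iff) auto
qed

lemma pw_core:
  fixes ell :: "'r::finite \<Rightarrow> 'y::finite \<Rightarrow> real" and L :: "'a \<Rightarrow> 'y \<Rightarrow> real"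
    and S :: "'a set" and \<psi> :: "'a \<Rightarrow> 'r"
  assumes finS: "finite S" and neS: "S \<noteq> {}"
    and rep: "\<And>p u. p \<in> psimplex \<Longrightarrow> minover S L p \<le> wsum p (L u)"
    and nnell: "\<And>r y. 0 \<le> ell r y"
    and cal: "\<And>p. p \<in> psimplex \<Longrightarrow> \<exists>\<epsilon>>0. \<forall>u. wsum p (L u) < minover S L p + \<epsilon> \<longrightarrow>
                 wsum p (ell (\<psi> u)) = minover UNIV ell p"
  shows "\<exists>c>0. \<forall>p\<in>psimplex. \<forall>u. wsum p (ell (\<psi> u)) - minover UNIV ell p \<le> c * (wsum p (L u) - minover S L p)"
proof -
  define tofun :: "real^'y \<Rightarrow> 'y \<Rightarrow> real" where "tofun q = (\<lambda>y. q$y)" for q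
  define Pv where "Pv s = {p::real^'y. (\<forall>y. 0 \<le> p$y) \<and> (\<Sum>y\<in>UNIV. p$y) = 1 \<and>
      (\<forall>k\<in>S. (\<Sum>y\<in>UNIV. p$y * (L s y - L k y)) \<le> 0)}" for s
  have ex: "\<forall>s\<in>S. \<exists>V. finite V \<and> Pv s = convex hull V"
    unfolding Pv_def by (intro ballI cell_polytope[OF finS])
  obtain V where V: "\<And>s. s \<in> S \<Longrightarrow> finite (V s) \<and> Pv s = convex hull (V s)"
    using bchoice[OF ex] by blast
  have Pv_iff: "q \<in> Pv s \<longleftrightarrow> tofun q \<in> psimplex \<and> (\<forall>k\<in>S. wsum (tofun q) (L s) \<le> wsum (tofun q) (L k))" for q s
  proof -
    have e: "(\<Sum>y\<in>UNIV. q$y * (L s y - L k y)) = wsum (tofun q) (L s) - wsum (tofun q) (L k)" for k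
      unfolding wsum_def tofun_def by (simp add: right_diff_distrib sum_subtractf)
    show ?thesis unfolding Pv_def psimplex_def mem_Collect_eq e by (simp add: tofun_def)
  qed
  have Pv_min: "minover S L (tofun q) = wsum (tofun q) (L s)" if "q \<in> Pv s" "s \<in> S" for q s
  proof -
    obtain k where k: "k \<in> S" "minover S L (tofun q) = wsum (tofun q) (L k)" using minover_ex[OF finS neS] by blast
    have "wsum (tofun q) (L s) \<le> wsum (tofun q) (L k)" using that(1) k(1) unfolding Pv_iff by blast
    moreover have "minover S L (tofun q) \<le> wsum (tofun q) (L s)" by (rule minover_le[OF finS that(2)])
    ultimately show ?thesis using k(2) by linarith
  qed
  define Q where "Q = (\<Union>s\<in>S. V s)"
  have finQ: "finite Q" unfolding Q_def using V finS by (intro finite_UN_I) auto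
  have Qsimp: "tofun q \<in> psimplex" if qQ: "q \<in> Q" for q
  proof -
    obtain s where s: "s \<in> S" "q \<in> V s" using qQ unfolding Q_def by auto
    have "q \<in> convex hull (V s)" using s(2) by (rule hull_inc)
    then have "q \<in> Pv s" using V[OF s(1)] by simp
    then show ?thesis using Pv_iff by auto
  qed
  have ex2: "\<forall>q\<in>Q. \<exists>\<epsilon>>0. \<forall>u. wsum (tofun q) (L u) < minover S L (tofun q) + \<epsilon> \<longrightarrow>
                 wsum (tofun q) (ell (\<psi> u)) = minover UNIV ell (tofun q)"
  proof
    fix q assume "q \<in> Q"
    from cal[OF Qsimp[OF this]] show "\<exists>\<epsilon>>0. \<forall>u. wsum (tofun q) (L u) < minover S L (tofun q) + \<epsilon> \<longrightarrow>
                 wsum (tofun q) (ell (\<psi> u)) = minover UNIV ell (tofun q)" .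
  qed
  from bchoice[OF ex2] obtain eps where eps0: "\<forall>q\<in>Q. eps q > 0 \<and> (\<forall>u. wsum (tofun q) (L u) < minover S L (tofun q) + eps q \<longrightarrow>
                 wsum (tofun q) (ell (\<psi> u)) = minover UNIV ell (tofun q))" ..
  have eps: "eps q > 0 \<and> (\<forall>u. wsum (tofun q) (L u) < minover S L (tofun q) + eps q \<longrightarrow>
                 wsum (tofun q) (ell (\<psi> u)) = minover UNIV ell (tofun q))" if "q \<in> Q" for q
    using eps0 that by blast
  define em where "em = Min (insert 1 (eps ` Q))"
  have em_pos: "em > 0" unfolding em_def using finQ eps by (subst Min_gr_iff) auto
  have em_le: "em \<le> eps q" if "q \<in> Q" for q unfolding em_def using finQ that by (intro Min_le) auto
  define B where "B = (\<Sum>r\<in>UNIV. \<Sum>y\<in>UNIV. ell r y)"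
  have ellB: "ell r y \<le> B" for r y
  proof -
    have "ell r y \<le> (\<Sum>y\<in>UNIV. ell r y)" using nnell by (intro member_le_sum) auto
    also have "\<dots> \<le> B" unfolding B_def using nnell by (intro member_le_sum sum_nonneg) auto
    finally show ?thesis .
  qed
  have B_nn: "0 \<le> B" using ellB[of undefined undefined] nnell[of undefined undefined] by linarith
  have wB: "wsum p (ell r) \<le> B" if "p \<in> psimplex" for p r
  proof -
    have "wsum p (ell r) \<le> (\<Sum>y\<in>UNIV. p y * B)" unfolding wsum_def using that ellB
      by (intro sum_mono mult_left_mono) (auto simp: psimplex_def)
    also have "\<dots> = B" using that by (simp add: psimplex_def flip: sum_distrib_right)
    finally show ?thesis .
  qed
  have wnn: "0 \<le> wsum p (ell r)" if "p \<in> psimplex" for p r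
    unfolding wsum_def using that nnell by (intro sum_nonneg mult_nonneg_nonneg) (auto simp: psimplex_def)
  have emin_nn: "0 \<le> minover UNIV ell p" if "p \<in> psimplex" for p
    using minover_ex[of "UNIV::'r set" ell p] wnn[OF that] by auto
  define c where "c = (B + 1) / em"
  have c_pos: "c > 0" unfolding c_def using em_pos B_nn by simp
  have atQ: "wsum (tofun q) (ell (\<psi> u)) - minover UNIV ell (tofun q) \<le> c * (wsum (tofun q) (L u) - minover S L (tofun q))"
    if "q \<in> Q" for q u
  proof (cases "wsum (tofun q) (L u) < minover S L (tofun q) + eps q")
    case True
    then have "wsum (tofun q) (ell (\<psi> u)) = minover UNIV ell (tofun q)" using eps[OF that] by blast
    moreover have "0 \<le> c * (wsum (tofun q) (L u) - minover S L (tofun q))"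
      using rep[OF Qsimp[OF that]] c_pos by simp
    ultimately show ?thesis by simp
  next
    case False
    then have "em \<le> wsum (tofun q) (L u) - minover S L (tofun q)" using em_le[OF that] by simp
    then have "c * em \<le> c * (wsum (tofun q) (L u) - minover S L (tofun q))" using c_pos by simp
    moreover have "c * em = B + 1" unfolding c_def using em_pos by simp
    moreover have "wsum (tofun q) (ell (\<psi> u)) \<le> B" using wB[OF Qsimp[OF that]] .
    moreover have "0 \<le> minover UNIV ell (tofun q)" using emin_nn[OF Qsimp[OF that]] .
    ultimately show ?thesis by simp
  qed
  show ?thesis
  proof (intro exI[of _ c] conjI c_pos ballI allI)
    fix p :: "'y \<Rightarrow> real" and u
    assume p: "p \<in> psimplex"
    define pv :: "real^'y" where "pv = (\<chi> y. p y)"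
    have tp: "tofun pv = p" unfolding tofun_def pv_def by (simp add: fun_eq_iff)
    obtain s where s: "s \<in> S" "minover S L p = wsum p (L s)" using minover_ex[OF finS neS] by blast
    have "pv \<in> Pv s" unfolding Pv_iff tp using p s minover_le[OF finS, of _ L p] by auto
    then have pvV: "pv \<in> convex hull (V s)" using V[OF s(1)] by simp
    define r where "r = \<psi> u"
    define f where "f x = wsum (tofun x) (ell r) - minover UNIV ell (tofun x) - c * (wsum (tofun x) (L u) - wsum (tofun x) (L s))" for x
    have tcomb: "tofun ((1 - t) *\<^sub>R x + t *\<^sub>R y) = (\<lambda>i. (1 - t) * tofun x i + t * tofun y i)" for t x y
      unfolding tofun_def by (simp add: fun_eq_iff)
    have conv: "convex_on (convex hull (V s)) f"
    proof (rule convex_onI)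
      fix t :: real and x y assume t: "0 < t" "t < 1"
      have "(1 - t) * minover UNIV ell (tofun x) + t * minover UNIV ell (tofun y)
            \<le> minover UNIV ell (\<lambda>i. (1 - t) * tofun x i + t * tofun y i)"
        using t by (intro minover_concave) auto
      then show "f ((1 - t) *\<^sub>R x + t *\<^sub>R y) \<le> (1 - t) * f x + t * f y"
        unfolding f_def tcomb wsum_comb by (simp add: algebra_simps)
    qed (rule convex_convex_hull)
    have "f q \<le> 0" if "q \<in> V s" for q
    proof -
      have qQ: "q \<in> Q" using that s(1) unfolding Q_def by auto
      have "q \<in> convex hull (V s)" using that by (rule hull_inc)
      then have "q \<in> Pv s" using V[OF s(1)] by simp
      then have "minover S L (tofun q) = wsum (tofun q) (L s)" using Pv_min s(1) by blast
      then show ?thesis using atQ[OF qQ, of u] unfolding f_def r_def by simp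
    qed
    then have "f pv \<le> 0" using convex_on_convex_hull_bound[OF conv] pvV by blast
    then show "wsum p (ell (\<psi> u)) - minover UNIV ell p \<le> c * (wsum p (L u) - minover S L p)"
      unfolding f_def tp r_def s(2) by simp
  qed
qed

lemma pt_meas: "x0 \<in> space MX \<Longrightarrow> (\<lambda>y. (x0, y)) \<in> measurable (measure_pmf P) (MX \<Otimes>\<^sub>M count_space UNIV)"
  by (simp add: space_pair_measure)

lemma exp_loss_point:
  fixes F :: "'r \<Rightarrow> 'y::finite \<Rightarrow> real"
  assumes x0: "x0 \<in> space MX"
    and Fm: "(\<lambda>z. ennreal (F (h (fst z)) (snd z))) \<in> borel_measurable (MX \<Otimes>\<^sub>M count_space UNIV)"
    and nn: "\<And>r y. 0 \<le> F r y"
  shows "exp_loss F (distr (measure_pmf P) (MX \<Otimes>\<^sub>M count_space UNIV) (\<lambda>y. (x0, y))) h = ennreal (wsum (pmf P) (F (h x0)))"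
proof -
  have "exp_loss F (distr (measure_pmf P) (MX \<Otimes>\<^sub>M count_space UNIV) (\<lambda>y. (x0, y))) h
      = (\<integral>\<^sup>+ y. ennreal (F (h x0) y) \<partial>measure_pmf P)"
    unfolding exp_loss_def using Fm by (subst nn_integral_distr[OF pt_meas[OF x0]]) simp_all
  also have "\<dots> = (\<Sum>y\<in>UNIV. ennreal (pmf P y) * ennreal (F (h x0) y))"
    by (simp add: nn_integral_measure_pmf nn_integral_count_space_finite)
  also have "\<dots> = (\<Sum>y\<in>UNIV. ennreal (pmf P y * F (h x0) y))"
    by (intro sum.cong refl ennreal_mult[symmetric] pmf_nonneg nn)
  also have "\<dots> = ennreal (wsum (pmf P) (F (h x0)))"
    unfolding wsum_def by (intro sum_ennreal mult_nonneg_nonneg pmf_nonneg nn)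
  finally show ?thesis .
qed

lemma Lmeas:
  fixes A :: "'y \<Rightarrow> ('a::euclidean_space \<times> real) set"
  assumes fin: "\<And>y. finite (A y)" and Ldef: "\<And>u y. L u y = Max ((\<lambda>(a,b). a \<bullet> u + b) ` A y)"
  shows "(\<lambda>u. L u y) \<in> borel_measurable borel"
proof -
  have "(\<lambda>u. L u y) = (\<lambda>u. Max ((\<lambda>i. fst i \<bullet> u + snd i) ` A y))"
    unfolding Ldef by (simp add: case_prod_beta')
  also have "\<dots> \<in> borel_measurable borel"
    using fin by (intro borel_measurable_Max) auto
  finally show ?thesis .
qed

lemma prodmeas:
  fixes F :: "'r \<Rightarrow> 'y::countable \<Rightarrow> real"
  assumes "\<And>y. (\<lambda>x. F (h x) y) \<in> borel_measurable MX"
  shows "(\<lambda>z. ennreal (F (h (fst z)) (snd z))) \<in> borel_measurable (MX \<Otimes>\<^sub>M count_space UNIV)"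
proof -
  have "(\<lambda>z. ennreal (F (h (fst z)) y)) \<in> borel_measurable (MX \<Otimes>\<^sub>M count_space UNIV)" for y
    using assms[of y] by measurable
  then show ?thesis
    by (rule measurable_compose_countable'[where g=snd and I=UNIV]) auto
qed

lemma minover_nn:
  assumes "finite X" "X \<noteq> {}" "\<And>x. x \<in> X \<Longrightarrow> 0 \<le> wsum p (F x)"
  shows "0 \<le> minover X F p"
  using minover_ex[OF assms(1,2), of F p] assms(3) by auto

lemma wsum_nn: "(\<And>y. 0 \<le> p y) \<Longrightarrow> (\<And>y. 0 \<le> v y) \<Longrightarrow> 0 \<le> wsum p v"
  unfolding wsum_def by (intro sum_nonneg mult_nonneg_nonneg) auto

lemma calib:
  fixes MX :: "'x measure" and ell :: "'r::finite \<Rightarrow> 'y::finite \<Rightarrow> real"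
    and L :: "'a::euclidean_space \<Rightarrow> 'y \<Rightarrow> real" and \<psi> :: "'a \<Rightarrow> 'r"
  assumes cons: "consistent MX L \<psi> ell" and x0: "x0 \<in> space MX"
    and finS: "finite S" and neS: "S \<noteq> {}"
    and rep: "\<And>p u. p \<in> psimplex \<Longrightarrow> minover S L p \<le> wsum p (L u)"
    and Lm: "\<And>y. (\<lambda>u. L u y) \<in> borel_measurable borel"
    and nnL: "\<And>u y. 0 \<le> L u y" and nnell: "\<And>r y. 0 \<le> ell r y"
    and p: "p \<in> psimplex"
  shows "\<exists>\<epsilon>>0. \<forall>u. wsum p (L u) < minover S L p + \<epsilon> \<longrightarrow> wsum p (ell (\<psi> u)) = minover UNIV ell p"
proof (rule ccontr)
  assume neg: "\<not> ?thesis"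
  have pnn: "\<And>y. 0 \<le> p y" and psum: "sum p UNIV = 1" using p unfolding psimplex_def by auto
  define P where "P = embed_pmf p"
  have prob: "(\<integral>\<^sup>+x. ennreal (p x) \<partial>count_space UNIV) = 1"
    by (simp add: nn_integral_count_space_finite sum_ennreal pnn psum)
  have pmfP: "pmf P = p" unfolding P_def using pmf_embed_pmf[OF pnn prob] by (simp add: fun_eq_iff)
  define D where "D = distr (measure_pmf P) (MX \<Otimes>\<^sub>M count_space UNIV) (\<lambda>y. (x0, y))"
  have dd: "data_dist MX D" unfolding data_dist_def D_def
    using prob_space.prob_space_distr[OF prob_space_measure_pmf pt_meas[OF x0]] by simp
  have expL: "exp_loss L D h = ennreal (wsum p (L (h x0)))" if h: "h \<in> borel_measurable MX" for h
  proof -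
    have "(\<lambda>x. L (h x) y) \<in> borel_measurable MX" for y using measurable_compose[OF h Lm] by simp
    then have m: "(\<lambda>z. ennreal (L (h (fst z)) (snd z))) \<in> borel_measurable (MX \<Otimes>\<^sub>M count_space UNIV)"
      by (rule prodmeas)
    show ?thesis unfolding D_def exp_loss_point[where F=L and h=h, OF x0 m nnL] pmfP ..
  qed
  have expell: "exp_loss ell D h = ennreal (wsum p (ell (h x0)))" if h: "h \<in> measurable MX (count_space UNIV)" for h
  proof -
    have "(\<lambda>x. ell (h x) y) \<in> borel_measurable MX" for y
      using measurable_compose[OF h, of "\<lambda>r. ell r y" borel] by simp
    then have m: "(\<lambda>z. ennreal (ell (h (fst z)) (snd z))) \<in> borel_measurable (MX \<Otimes>\<^sub>M count_space UNIV)"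
      by (rule prodmeas)
    show ?thesis unfolding D_def exp_loss_point[where F=ell and h=h, OF x0 m nnell] pmfP ..
  qed
  have Lmin_nn: "0 \<le> minover S L p" by (intro minover_nn[OF finS neS] wsum_nn pnn nnL)
  have ellmin_nn: "0 \<le> minover UNIV ell p" by (intro minover_nn wsum_nn pnn nnell) auto
  have INFL: "(INF h'\<in>borel_measurable MX. exp_loss L D h') = ennreal (minover S L p)"
  proof (rule antisym)
    obtain s where s: "s \<in> S" "minover S L p = wsum p (L s)" using minover_ex[OF finS neS] by blast
    have "(\<lambda>x. s) \<in> borel_measurable MX" by simp
    then show "(INF h'\<in>borel_measurable MX. exp_loss L D h') \<le> ennreal (minover S L p)"
      by (rule INF_lower2) (simp add: expL s(2))
  next
    show "ennreal (minover S L p) \<le> (INF h'\<in>borel_measurable MX. exp_loss L D h')"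
      by (rule INF_greatest) (simp add: expL ennreal_leI[OF rep[OF p]])
  qed
  have INFell: "(INF h'\<in>measurable MX (count_space UNIV). exp_loss ell D h') \<le> ennreal (minover UNIV ell p)"
  proof -
    obtain r where r: "minover UNIV ell p = wsum p (ell r)" using minover_ex[of UNIV ell p] by auto
    have "(\<lambda>x. r) \<in> measurable MX (count_space UNIV)" by simp
    then show ?thesis by (rule INF_lower2) (simp add: expell r)
  qed
  have neg': "\<exists>u. wsum p (L u) < minover S L p + e \<and> wsum p (ell (\<psi> u)) \<noteq> minover UNIV ell p"
    if "e > 0" for e
  proof (rule ccontr)
    assume "\<not> (\<exists>u. wsum p (L u) < minover S L p + e \<and> wsum p (ell (\<psi> u)) \<noteq> minover UNIV ell p)"
    then have "\<forall>u. wsum p (L u) < minover S L p + e \<longrightarrow> wsum p (ell (\<psi> u)) = minover UNIV ell p" by blast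
    then have "\<exists>\<epsilon>>0. \<forall>u. wsum p (L u) < minover S L p + \<epsilon> \<longrightarrow> wsum p (ell (\<psi> u)) = minover UNIV ell p"
      using that by (intro exI[of _ e]) simp
    then show False using neg by (rule notE[rotated])
  qed
  define us where "us n = (SOME u. wsum p (L u) < minover S L p + 1 / Suc n \<and> wsum p (ell (\<psi> u)) \<noteq> minover UNIV ell p)" for n :: nat
  have us_all: "wsum p (L (us n)) < minover S L p + 1 / Suc n \<and> wsum p (ell (\<psi> (us n))) \<noteq> minover UNIV ell p" for n
    unfolding us_def by (rule someI_ex[OF neg']) simp
  have us: "\<And>n. wsum p (L (us n)) < minover S L p + 1 / Suc n"
      "\<And>n. wsum p (ell (\<psi> (us n))) \<noteq> minover UNIV ell p" using us_all by auto
  define hs :: "nat \<Rightarrow> 'x \<Rightarrow> 'a" where "hs n = (\<lambda>x. us n)" for n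
  have hsm: "hs i \<in> borel_measurable MX" for i unfolding hs_def by simp
  define a where "a n = wsum p (L (us n)) - minover S L p" for n
  have regL: "regret MX borel L D (hs n) = ennreal (a n)" for n
    unfolding regret_def INFL a_def using expL[OF hsm[of n]] Lmin_nn
    by (simp add: hs_def ennreal_minus)
  have a_nn: "0 \<le> a n" for n unfolding a_def using rep[OF p] by simp
  have a_lim: "a \<longlonglongrightarrow> 0"
  proof (rule tendsto_sandwich[of "\<lambda>n. 0" _ _ "\<lambda>n. 1 / Suc n"])
    show "\<forall>\<^sub>F n in sequentially. 0 \<le> a n" using a_nn by simp
    show "\<forall>\<^sub>F n in sequentially. a n \<le> 1 / real (Suc n)" using us(1) unfolding a_def
      by (simp add: less_imp_le algebra_simps)
    show "(\<lambda>n. 1 / real (Suc n)) \<longlonglongrightarrow> 0" by (rule LIMSEQ_Suc[OF lim_1_over_n])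
  qed simp
  have Lconv: "(\<lambda>n. regret MX borel L D (hs n)) \<longlonglongrightarrow> 0"
    unfolding regL using tendsto_ennrealI[OF a_lim] by simp
  have c1: "data_dist MX D \<longrightarrow> (\<forall>hs :: nat \<Rightarrow> 'x \<Rightarrow> 'a. (\<forall>i. hs i \<in> borel_measurable MX) \<longrightarrow>
           ((\<lambda>i. regret MX borel L D (hs i)) \<longlonglongrightarrow> 0) \<longrightarrow>
           ((\<lambda>i. regret MX (count_space UNIV) ell D (\<psi> \<circ> hs i)) \<longlonglongrightarrow> 0))"
    using cons unfolding consistent_def by (rule spec)
  have ellconv: "(\<lambda>n. regret MX (count_space UNIV) ell D (\<psi> \<circ> hs n)) \<longlonglongrightarrow> 0"
    using c1[rule_format, OF dd _ Lconv] hsm by blast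
  define G where "G = {r. wsum p (ell r) \<noteq> minover UNIV ell p}"
  have G_ne: "G \<noteq> {}" using us(2)[of 0] unfolding G_def by auto
  define gap where "gap = Min ((\<lambda>r. wsum p (ell r) - minover UNIV ell p) ` G)"
  have gap_pos: "0 < gap"
  proof -
    have "0 < wsum p (ell r) - minover UNIV ell p" if "r \<in> G" for r
      using that minover_le[of UNIV r ell p] unfolding G_def by auto
    then show ?thesis unfolding gap_def using G_ne by (subst Min_gr_iff) auto
  qed
  have gap_le: "ennreal gap \<le> regret MX (count_space UNIV) ell D (\<psi> \<circ> hs n)" for n
  proof -
    have m: "\<psi> \<circ> hs n \<in> measurable MX (count_space UNIV)" unfolding hs_def by (simp add: comp_def)
    have "gap \<le> wsum p (ell (\<psi> (us n))) - minover UNIV ell p"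
      unfolding gap_def using us(2)[of n] unfolding G_def by (intro Min_le) auto
    then have "ennreal gap \<le> ennreal (wsum p (ell (\<psi> (us n)))) - ennreal (minover UNIV ell p)"
      using ellmin_nn by (simp add: ennreal_minus ennreal_leI)
    also have "\<dots> \<le> regret MX (count_space UNIV) ell D (\<psi> \<circ> hs n)"
      unfolding regret_def expell[OF m]
      by (rule ennreal_minus_mono) (auto simp: hs_def INFell)
    finally show ?thesis .
  qed
  have "\<forall>\<^sub>F n in sequentially. regret MX (count_space UNIV) ell D (\<psi> \<circ> hs n) < ennreal gap"
    using order_tendstoD(2)[OF ellconv] gap_pos by simp
  then obtain n where "regret MX (count_space UNIV) ell D (\<psi> \<circ> hs n) < ennreal gap"
    unfolding eventually_sequentially by auto
  then show False using gap_le[of n] by simp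
qed

lemma decomp:
  fixes MX :: "'x measure" and D :: "('x \<times> 'y::finite) measure"
  assumes dd: "data_dist MX D"
  obtains \<nu> w where "sets \<nu> = sets MX" "space \<nu> = space MX"
    "\<And>y. w y \<in> borel_measurable MX" "\<And>y x. 0 \<le> w y x"
    "\<And>F. F \<in> borel_measurable (MX \<Otimes>\<^sub>M count_space UNIV) \<Longrightarrow>
        (\<integral>\<^sup>+z. F z \<partial>D) = (\<integral>\<^sup>+x. (\<Sum>y\<in>UNIV. ennreal (w y x) * F (x, y)) \<partial>\<nu>)"
proof -
  have pD: "prob_space D" and sD: "sets D = sets (MX \<Otimes>\<^sub>M count_space UNIV)"
    using dd unfolding data_dist_def by auto
  interpret D: prob_space D by (rule pD)
  have mD: "measurable D N = measurable (MX \<Otimes>\<^sub>M count_space UNIV) N" for N :: "'b measure"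
    by (rule measurable_cong_sets[OF sD refl])
  have fstm: "fst \<in> measurable D MX" unfolding mD by simp
  define \<nu> where "\<nu> = distr D MX fst"
  have s\<nu>: "sets \<nu> = sets MX" and sp\<nu>: "space \<nu> = space MX" unfolding \<nu>_def by auto
  have p\<nu>: "prob_space \<nu>" unfolding \<nu>_def by (rule D.prob_space_distr[OF fstm])
  interpret nu: prob_space \<nu> by (rule p\<nu>)
  define ind :: "'y \<Rightarrow> 'x \<times> 'y \<Rightarrow> ennreal" where "ind y z = (if snd z = y then 1 else 0)" for y z
  have indm: "ind y \<in> borel_measurable D" for y unfolding mD ind_def by measurable
  define \<mu> where "\<mu> y = distr (density D (ind y)) MX fst" for y
  have fstm': "fst \<in> measurable (density D (ind y)) MX" for y
    using fstm by (simp add: measurable_cong_sets[OF sets_density refl])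
  have s\<mu>: "sets (\<mu> y) = sets \<nu>" for y unfolding \<mu>_def \<nu>_def by simp
  have \<mu>le: "emeasure (\<mu> y) A \<le> emeasure \<nu> A" if A: "A \<in> sets MX" for y A
  proof -
    have B: "fst -` A \<inter> space D \<in> sets D" using fstm A by (rule measurable_sets)
    have "emeasure (\<mu> y) A = emeasure (density D (ind y)) (fst -` A \<inter> space (density D (ind y)))"
      unfolding \<mu>_def using A fstm' by (simp add: emeasure_distr)
    also have "\<dots> = (\<integral>\<^sup>+z. ind y z * indicator (fst -` A \<inter> space D) z \<partial>D)"
      using B indm by (simp add: emeasure_density)
    also have "\<dots> \<le> (\<integral>\<^sup>+z. indicator (fst -` A \<inter> space D) z \<partial>D)"
      by (intro nn_integral_mono) (auto simp: ind_def indicator_def)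
    also have "\<dots> = emeasure \<nu> A" unfolding \<nu>_def using A B fstm by (simp add: emeasure_distr)
    finally show ?thesis .
  qed
  have ac: "absolutely_continuous \<nu> (\<mu> y)" for y
    unfolding absolutely_continuous_def
  proof
    fix A assume A0: "A \<in> null_sets \<nu>"
    have A1: "A \<in> sets MX" using null_setsD2[OF A0] s\<nu> by simp
    have A2: "emeasure \<nu> A = 0" using null_setsD1[OF A0] .
    have "emeasure (\<mu> y) A = 0" using \<mu>le[OF A1, of y] A2 by simp
    moreover have "A \<in> sets (\<mu> y)" unfolding s\<mu> s\<nu> by (rule A1)
    ultimately show "A \<in> null_sets (\<mu> y)" by (rule null_setsI)
  qed
  have fin\<mu>: "sigma_finite_measure (\<mu> y)" for y
  proof -
    have sp: "space (\<mu> y) = space MX" unfolding \<mu>_def by simp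
    have "emeasure (\<mu> y) (space MX) \<le> emeasure \<nu> (space MX)"
      by (rule \<mu>le) simp
    also have "\<dots> = 1" using nu.emeasure_space_1 sp\<nu> by simp
    finally have "emeasure (\<mu> y) (space (\<mu> y)) \<noteq> \<infinity>" unfolding sp by (auto simp: top_unique)
    then interpret finite_measure "\<mu> y" by (rule finite_measureI)
    show ?thesis by unfold_locales
  qed
  define RN where "RN y = RN_deriv \<nu> (\<mu> y)" for y
  have dens: "density \<nu> (RN y) = \<mu> y" for y
    unfolding RN_def by (rule nu.density_RN_deriv[OF ac s\<mu>])
  have RNm: "RN y \<in> borel_measurable \<nu>" for y unfolding RN_def by (rule borel_measurable_RN_deriv)
  have RNm': "RN y \<in> borel_measurable MX" for y
    using RNm[of y] by (simp only: measurable_cong_sets[OF s\<nu> refl])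
  have RNfin: "AE x in \<nu>. RN y x \<noteq> \<infinity>" for y
    unfolding RN_def by (rule nu.RN_deriv_finite[OF fin\<mu> ac s\<mu>])
  define w where "w y x = enn2real (RN y x)" for y x
  have wm: "w y \<in> borel_measurable MX" for y
    unfolding w_def by (rule borel_measurable_enn2real[OF RNm'])
  have wnn: "0 \<le> w y x" for y x unfolding w_def by (rule enn2real_nonneg)
  have AEw1: "AE x in \<nu>. RN y x = ennreal (w y x)" for y
    by (rule AE_mp[OF RNfin[of y]]) (simp add: w_def less_top[symmetric])
  have AEw: "AE x in \<nu>. \<forall>y\<in>UNIV. RN y x = ennreal (w y x)"
    by (rule AE_finite_allI) (simp_all add: AEw1)
  have main: "(\<integral>\<^sup>+z. F z \<partial>D) = (\<integral>\<^sup>+x. (\<Sum>y\<in>UNIV. ennreal (w y x) * F (x, y)) \<partial>\<nu>)"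
    if Fm: "F \<in> borel_measurable (MX \<Otimes>\<^sub>M count_space UNIV)" for F
  proof -
    have Fy: "(\<lambda>x. F (x, y)) \<in> borel_measurable MX" for y
    proof -
      have "(\<lambda>x. (x, y)) \<in> measurable MX (MX \<Otimes>\<^sub>M count_space UNIV)"
        by (intro measurable_Pair measurable_ident_sets measurable_const) auto
      from measurable_compose[OF this Fm] show ?thesis .
    qed
    have Fy': "(\<lambda>x. F (x, y)) \<in> borel_measurable \<nu>" for y
      using Fy[of y] by (simp only: measurable_cong_sets[OF s\<nu> refl])
    have Fyz: "(\<lambda>z. F (fst z, y)) \<in> borel_measurable D" for y
    proof -
      have "(\<lambda>z. (fst z, y)) \<in> measurable (MX \<Otimes>\<^sub>M count_space UNIV) (MX \<Otimes>\<^sub>M count_space UNIV)"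
        by (intro measurable_Pair measurable_fst'' measurable_const) auto
      from measurable_compose[OF this Fm] show ?thesis unfolding mD .
    qed
    have "(\<integral>\<^sup>+z. F z \<partial>D) = (\<integral>\<^sup>+z. (\<Sum>y\<in>UNIV. ind y z * F (fst z, y)) \<partial>D)"
    proof (intro nn_integral_cong)
      fix z :: "'x \<times> 'y"
      have "(\<Sum>y\<in>UNIV. ind y z * F (fst z, y)) = (\<Sum>y\<in>{snd z}. ind y z * F (fst z, y))"
        by (intro sum.mono_neutral_right) (auto simp: ind_def)
      then show "F z = (\<Sum>y\<in>UNIV. ind y z * F (fst z, y))" by (simp add: ind_def)
    qed
    also have "\<dots> = (\<Sum>y\<in>UNIV. (\<integral>\<^sup>+z. ind y z * F (fst z, y) \<partial>D))"
      using indm Fyz by (intro nn_integral_sum) auto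
    also have "\<dots> = (\<Sum>y\<in>UNIV. (\<integral>\<^sup>+x. F (x, y) \<partial>\<mu> y))"
    proof (intro sum.cong refl)
      fix y
      have "(\<integral>\<^sup>+z. ind y z * F (fst z, y) \<partial>D) = (\<integral>\<^sup>+z. F (fst z, y) \<partial>density D (ind y))"
        using indm Fyz by (simp add: nn_integral_density)
      also have "\<dots> = (\<integral>\<^sup>+x. F (x, y) \<partial>\<mu> y)"
        unfolding \<mu>_def using Fy[of y] fstm' by (simp add: nn_integral_distr)
      finally show "(\<integral>\<^sup>+z. ind y z * F (fst z, y) \<partial>D) = (\<integral>\<^sup>+x. F (x, y) \<partial>\<mu> y)" .
    qed
    also have "\<dots> = (\<Sum>y\<in>UNIV. (\<integral>\<^sup>+x. RN y x * F (x, y) \<partial>\<nu>))"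
    proof (intro sum.cong refl)
      fix y
      show "(\<integral>\<^sup>+x. F (x, y) \<partial>\<mu> y) = (\<integral>\<^sup>+x. RN y x * F (x, y) \<partial>\<nu>)"
        unfolding dens[symmetric] using RNm Fy' by (simp add: nn_integral_density)
    qed
    also have "\<dots> = (\<integral>\<^sup>+x. (\<Sum>y\<in>UNIV. RN y x * F (x, y)) \<partial>\<nu>)"
      using RNm Fy' by (intro nn_integral_sum[symmetric]) auto
    also have "\<dots> = (\<integral>\<^sup>+x. (\<Sum>y\<in>UNIV. ennreal (w y x) * F (x, y)) \<partial>\<nu>)"
      by (intro nn_integral_cong_AE) (use AEw in \<open>auto\<close>)
    finally show ?thesis .
  qed
  show ?thesis by (rule that[OF s\<nu> sp\<nu> wm wnn main])
qed

lemma wsum_scale: "wsum (\<lambda>y. t * p y) v = t * wsum p v"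
  unfolding wsum_def by (simp add: sum_distrib_left mult.assoc)

lemma minover_scale:
  assumes "finite X" "X \<noteq> {}" "0 \<le> t"
  shows "minover X F (\<lambda>y. t * p y) = t * minover X F p"
proof -
  have mono: "mono (\<lambda>z::real. t * z)" using assms(3) by (intro monoI mult_left_mono)
  have "t * Min ((\<lambda>x. wsum p (F x)) ` X) = Min ((\<lambda>z. t * z) ` ((\<lambda>x. wsum p (F x)) ` X))"
    using assms by (intro mono_Min_commute[OF mono]) auto
  then show ?thesis unfolding minover_def wsum_scale image_image by simp
qed

lemma pw_hom:
  fixes ell :: "'r::finite \<Rightarrow> 'y::finite \<Rightarrow> real"
  assumes finS: "finite S" and neS: "S \<noteq> {}" and c: "0 < c"
    and pw: "\<forall>p\<in>psimplex. \<forall>u. wsum p (ell (\<psi> u)) - minover UNIV ell p \<le> c * (wsum p (L u) - minover S L p)"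
    and w: "\<And>y. 0 \<le> w y"
  shows "wsum w (ell (\<psi> u)) + c * minover S L w \<le> minover UNIV ell w + c * wsum w (L u)"
proof (cases "sum w UNIV = 0")
  case True
  then have w0: "w = (\<lambda>y. 0 * w y)" using w by (simp add: sum_nonneg_eq_0_iff fun_eq_iff)
  have m0: "minover X F (\<lambda>y. 0) = 0" if "finite X" "X \<noteq> {}" for X and F :: "'b \<Rightarrow> 'y \<Rightarrow> real"
    using minover_scale[OF that, of 0 F w] by simp
  have ws0: "wsum (\<lambda>y. 0) v = 0" for v unfolding wsum_def by simp
  have "w = (\<lambda>y. 0)" using w0 by simp
  then show ?thesis using m0[OF finS neS] m0[of "UNIV::'r set"] by (simp add: wsum_def)
next
  case False
  define t where "t = sum w UNIV"
  have tpos: "0 < t" unfolding t_def using False w by (simp add: order_le_neq_trans sum_nonneg)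
  define p where "p y = w y / t" for y
  have wp: "w = (\<lambda>y. t * p y)" unfolding p_def using tpos by (simp add: fun_eq_iff)
  have p: "p \<in> psimplex" unfolding psimplex_def p_def using w tpos
    by (auto simp: t_def simp flip: sum_divide_distrib)
  have "wsum p (ell (\<psi> u)) - minover UNIV ell p \<le> c * (wsum p (L u) - minover S L p)" using pw p by blast
  then have "t * (wsum p (ell (\<psi> u)) - minover UNIV ell p) \<le> t * (c * (wsum p (L u) - minover S L p))"
    using tpos by (intro mult_left_mono) auto
  then show ?thesis
    by (subst (1 2 3 4) wp) (simp add: wsum_scale minover_scale finS neS tpos less_imp_le algebra_simps)
qed

lemma ennreal_final:
  fixes El Il EL IL INFl INFL :: ennreal and c :: real
  assumes c: "0 < c" and main: "El + ennreal c * IL \<le> Il + ennreal c * EL"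
    and h1: "Il \<le> INFl" and h2: "INFL \<le> IL" and f1: "Il < \<infinity>" and f2: "IL < \<infinity>"
  shows "El - INFl \<le> ennreal c * (EL - INFL)"
proof -
  have a: "El - INFl \<le> El - Il" using h1 by (intro ennreal_minus_mono) auto
  have b: "ennreal c * (EL - IL) \<le> ennreal c * (EL - INFL)"
    using h2 by (intro mult_left_mono ennreal_minus_mono) auto
  have "El - Il \<le> ennreal c * (EL - IL)"
  proof (cases "EL = \<infinity>")
    case True
    then have "EL - IL = \<infinity>" using f2 by simp
    then show ?thesis using c by (simp add: ennreal_mult_top)
  next
    case False
    then have fEL: "EL < \<infinity>" by (simp add: less_top)
    have "El \<le> Il + ennreal c * EL" using main by (metis add_increasing2 order.trans zero_le le_iff_add)
    also have "\<dots> < \<infinity>" using f1 fEL by (simp add: ennreal_mult_less_top)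
    finally have fEl: "El < \<infinity>" .
    obtain el where el: "El = ennreal el" "0 \<le> el" using fEl by (cases El rule: ennreal_cases) auto
    obtain il where il: "Il = ennreal il" "0 \<le> il" using f1 by (cases Il rule: ennreal_cases) auto
    obtain eL where eL: "EL = ennreal eL" "0 \<le> eL" using fEL by (cases EL rule: ennreal_cases) auto
    obtain iL where iL: "IL = ennreal iL" "0 \<le> iL" using f2 by (cases IL rule: ennreal_cases) auto
    have e1: "El + ennreal c * IL = ennreal (el + c * iL)" using el iL c by (simp add: ennreal_mult')
    have e2: "Il + ennreal c * EL = ennreal (il + c * eL)" using il eL c by (simp add: ennreal_mult')
    have "ennreal (el + c * iL) \<le> ennreal (il + c * eL)" using main unfolding e1 e2 .
    then have r: "el + c * iL \<le> il + c * eL"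
      using c el il eL iL by (subst (asm) ennreal_le_iff) auto
    have "El - Il = ennreal (el - il)" using el il by (simp add: ennreal_minus)
    also have "\<dots> \<le> ennreal (c * (eL - iL))" using r by (intro ennreal_leI) (simp add: algebra_simps)
    also have "\<dots> = ennreal c * (EL - IL)" using eL iL c by (simp add: ennreal_minus ennreal_mult')
    finally show ?thesis .
  qed
  then show ?thesis using a b by (meson order_trans)
qed

lemma integ_form:
  fixes MX :: "'x measure" and D :: "('x \<times> 'y::finite) measure" and G :: "'x \<Rightarrow> 'y \<Rightarrow> real"
  assumes decf: "\<And>F. F \<in> borel_measurable (MX \<Otimes>\<^sub>M count_space UNIV) \<Longrightarrow>
        (\<integral>\<^sup>+z. F z \<partial>D) = (\<integral>\<^sup>+x. (\<Sum>y\<in>UNIV. ennreal (w y x) * F (x, y)) \<partial>\<nu>)"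
    and wnn: "\<And>y x. 0 \<le> w y x"
    and Gm: "\<And>y. (\<lambda>x. G x y) \<in> borel_measurable MX" and Gnn: "\<And>x y. 0 \<le> G x y"
  shows "(\<integral>\<^sup>+z. ennreal (G (fst z) (snd z)) \<partial>D) = (\<integral>\<^sup>+x. ennreal (wsum (\<lambda>y. w y x) (G x)) \<partial>\<nu>)"
proof -
  have m: "(\<lambda>z. ennreal (G (fst z) (snd z))) \<in> borel_measurable (MX \<Otimes>\<^sub>M count_space UNIV)"
    using prodmeas[where F=G and h="\<lambda>x. x", OF Gm] by simp
  have e: "(\<Sum>y\<in>UNIV. ennreal (w y x) * ennreal (G x y)) = ennreal (wsum (\<lambda>y. w y x) (G x))" for x
  proof -
    have "(\<Sum>y\<in>UNIV. ennreal (w y x) * ennreal (G x y)) = (\<Sum>y\<in>UNIV. ennreal (w y x * G x y))"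
      by (intro sum.cong refl ennreal_mult[symmetric] wnn Gnn)
    also have "\<dots> = ennreal (wsum (\<lambda>y. w y x) (G x))"
      unfolding wsum_def by (intro sum_ennreal mult_nonneg_nonneg wnn Gnn)
    finally show ?thesis .
  qed
  show ?thesis unfolding decf[OF m] by (simp only: fst_conv snd_conv e)
qed

lemma wsum_meas:
  assumes "\<And>y. w y \<in> borel_measurable M"
  shows "(\<lambda>x. wsum (\<lambda>y. w y x) v) \<in> borel_measurable M"
  unfolding wsum_def using assms by (intro borel_measurable_sum borel_measurable_times borel_measurable_const) auto

lemma minover_meas:
  assumes "\<And>y. w y \<in> borel_measurable M" and "finite X"
  shows "(\<lambda>x. minover X F (\<lambda>y. w y x)) \<in> borel_measurable M"
  unfolding minover_def using assms by (intro borel_measurable_Min wsum_meas) auto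

theorem theorem7:
  fixes MX :: "'x measure"
    and ell :: "'r::finite \<Rightarrow> 'y::finite \<Rightarrow> real"
    and L :: "'a::euclidean_space \<Rightarrow> 'y \<Rightarrow> real"
    and \<psi> :: "'a \<Rightarrow> 'r"
  assumes "nonneg_loss ell"
    and "nonneg_loss L"
    and "polyhedral_loss L"
    and "consistent MX L \<psi> ell"
  shows "\<exists>c::real. c > 0 \<and>
           (\<forall>h \<in> borel_measurable MX. \<forall>D. data_dist MX D \<longrightarrow>
              regret MX (count_space UNIV) ell D (\<psi> \<circ> h) \<le> ennreal c * regret MX borel L D h)"
proof -
  from assms(3) have "\<forall>y. \<exists>A. finite A \<and> A \<noteq> {} \<and> (\<forall>u. L u y = Max ((\<lambda>(a, b). a \<bullet> u + b) ` A))"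
    unfolding polyhedral_loss_def .
  from choice[OF this] obtain A where A: "\<forall>y. finite (A y) \<and> A y \<noteq> {} \<and> (\<forall>u. L u y = Max ((\<lambda>(a, b). a \<bullet> u + b) ` A y))" ..
  have fin: "\<And>y. finite (A y)" and ne: "\<And>y. A y \<noteq> {}"
    and Ldef: "\<And>u y. L u y = Max ((\<lambda>(a, b). a \<bullet> u + b) ` A y)" using A by auto
  have nnL: "\<And>u y. 0 \<le> L u y" using assms(2) unfolding nonneg_loss_def by blast
  have nnell: "\<And>r y. 0 \<le> ell r y" using assms(1) unfolding nonneg_loss_def by blast
  define S where "S = Sset A L"
  have finS: "finite S" unfolding S_def by (rule Sset_finite[OF fin])
  have neS: "S \<noteq> {}" unfolding S_def by (rule Sset_ne)
  have repw: "minover S L w \<le> wsum w (L u)" if w: "\<And>y. 0 \<le> w y" for w u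
  proof -
    obtain s where s: "s \<in> S" "(\<Sum>y\<in>UNIV. w y * L s y) \<le> (\<Sum>y\<in>UNIV. w y * L u y)"
      using descent[where A=A and L=L and w=w and u=u, OF fin ne Ldef nnL w] unfolding S_def by blast
    have "minover S L w \<le> wsum w (L s)" by (rule minover_le[OF finS s(1)])
    also have "\<dots> \<le> wsum w (L u)" using s(2) unfolding wsum_def .
    finally show ?thesis .
  qed
  have repp: "minover S L p \<le> wsum p (L u)" if "p \<in> psimplex" for p u
    using that by (intro repw) (auto simp: psimplex_def)
  have Lm: "\<And>y. (\<lambda>u. L u y) \<in> borel_measurable borel" by (rule Lmeas[OF fin Ldef])
  show ?thesis
  proof (cases "space MX = {}")
    case True
    have nodd: "\<not> data_dist MX D" for D :: "('x \<times> 'y) measure"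
    proof
      assume dd: "data_dist MX D"
      then have pD: "prob_space D" and sD: "sets D = sets (MX \<Otimes>\<^sub>M count_space UNIV)"
        unfolding data_dist_def by auto
      have "space D = space (MX \<Otimes>\<^sub>M count_space UNIV)" by (rule sets_eq_imp_space_eq[OF sD])
      also have "\<dots> = {}" using True by (simp add: space_pair_measure)
      finally have "space D = {}" .
      then show False using prob_space.emeasure_space_1[OF pD] by simp
    qed
    show ?thesis using nodd by (intro exI[of _ 1]) auto
  next
    case False
    then obtain x0 where x0: "x0 \<in> space MX" by blast
    have cal: "\<exists>\<epsilon>>0. \<forall>u. wsum p (L u) < minover S L p + \<epsilon> \<longrightarrow> wsum p (ell (\<psi> u)) = minover UNIV ell p"
      if "p \<in> psimplex" for p
      by (rule calib[OF assms(4) x0 finS neS repp Lm nnL nnell that])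
    obtain c where c: "c > 0" and pw: "\<forall>p\<in>psimplex. \<forall>u. wsum p (ell (\<psi> u)) - minover UNIV ell p \<le> c * (wsum p (L u) - minover S L p)"
      using pw_core[OF finS neS repp nnell cal] by blast
    have hom: "wsum w (ell (\<psi> u)) + c * minover S L w \<le> minover UNIV ell w + c * wsum w (L u)"
      if "\<And>y. 0 \<le> w y" for w u
      by (rule pw_hom[OF finS neS c pw that])
    show ?thesis
    proof (intro exI[of _ c] conjI c ballI allI impI)
      fix h :: "'x \<Rightarrow> 'a" and D :: "('x \<times> 'y) measure"
      assume h: "h \<in> borel_measurable MX" and dd: "data_dist MX D"
      have sD: "sets D = sets (MX \<Otimes>\<^sub>M count_space UNIV)" using dd unfolding data_dist_def by auto
      have pD: "prob_space D" using dd unfolding data_dist_def by auto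
      have mD: "measurable D N = measurable (MX \<Otimes>\<^sub>M count_space UNIV) N" for N :: "'b measure"
        by (rule measurable_cong_sets[OF sD refl])
      obtain \<nu> w where s\<nu>: "sets \<nu> = sets MX" and sp\<nu>: "space \<nu> = space MX"
        and wm: "\<And>y. w y \<in> borel_measurable MX" and wnn: "\<And>y x. 0 \<le> w y x"
        and decf: "\<And>F. F \<in> borel_measurable (MX \<Otimes>\<^sub>M count_space UNIV) \<Longrightarrow>
          (\<integral>\<^sup>+z. F z \<partial>D) = (\<integral>\<^sup>+x. (\<Sum>y\<in>UNIV. ennreal (w y x) * F (x, y)) \<partial>\<nu>)"
        apply (rule decomp[OF dd]) by blast
      have m\<nu>: "measurable \<nu> N = measurable MX N" for N :: "'b measure"
        by (rule measurable_cong_sets[OF s\<nu> refl])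
      have wm': "w y \<in> borel_measurable \<nu>" for y unfolding m\<nu> by (rule wm)
      define IL where "IL = (\<integral>\<^sup>+x. ennreal (minover S L (\<lambda>y. w y x)) \<partial>\<nu>)"
      define Il where "Il = (\<integral>\<^sup>+x. ennreal (minover UNIV ell (\<lambda>y. w y x)) \<partial>\<nu>)"
      have Lminm: "(\<lambda>x. minover S L (\<lambda>y. w y x)) \<in> borel_measurable \<nu>"
        by (rule minover_meas[OF wm' finS])
      have eminm: "(\<lambda>x. minover UNIV ell (\<lambda>y. w y x)) \<in> borel_measurable \<nu>"
        by (rule minover_meas[OF wm']) simp
      have Lmin_nn: "0 \<le> minover S L (\<lambda>y. w y x)" for x
        by (intro minover_nn[OF finS neS] wsum_nn wnn nnL)
      have emin_nn: "0 \<le> minover UNIV ell (\<lambda>y. w y x)" for x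
        by (intro minover_nn wsum_nn wnn nnell) auto
      have ELf: "exp_loss L D h' = (\<integral>\<^sup>+x. ennreal (wsum (\<lambda>y. w y x) (L (h' x))) \<partial>\<nu>)"
        if h': "h' \<in> borel_measurable MX" for h'
        unfolding exp_loss_def
        by (rule integ_form[where G="\<lambda>x y. L (h' x) y", OF decf wnn]) (use measurable_compose[OF h' Lm] nnL in auto)
      have Elf: "exp_loss ell D h' = (\<integral>\<^sup>+x. ennreal (wsum (\<lambda>y. w y x) (ell (h' x))) \<partial>\<nu>)"
        if h': "h' \<in> measurable MX (count_space UNIV)" for h'
      proof -
        have "(\<lambda>x. ell (h' x) y) \<in> borel_measurable MX" for y
          using measurable_compose[OF h', of "\<lambda>r. ell r y" borel] by simp
        then show ?thesis unfolding exp_loss_def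
          by (intro integ_form[where G="\<lambda>x y. ell (h' x) y", OF decf wnn]) (auto simp: nnell)
      qed
      have Il_le: "Il \<le> (INF h'\<in>measurable MX (count_space UNIV). exp_loss ell D h')"
      proof (rule INF_greatest)
        fix h' :: "'x \<Rightarrow> 'r" assume h': "h' \<in> measurable MX (count_space UNIV)"
        show "Il \<le> exp_loss ell D h'" unfolding Elf[OF h'] Il_def
          by (intro nn_integral_mono ennreal_leI minover_le) auto
      qed
      obtain ss where ss: "set ss = S" using finite_list[OF finS] by blast
      define P where "P i x \<longleftrightarrow> i < length ss \<and> wsum (\<lambda>y. w y x) (L (ss ! i)) \<le> minover S L (\<lambda>y. w y x)" for i x
      define hs where "hs x = ss ! (LEAST i. P i x)" for x
      have exP: "\<exists>i. P i x" for x
      proof -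
        obtain s where s: "s \<in> S" "minover S L (\<lambda>y. w y x) = wsum (\<lambda>y. w y x) (L s)"
          using minover_ex[OF finS neS] by blast
        then obtain i where "i < length ss" "ss ! i = s" using ss by (auto simp: in_set_conv_nth)
        then show ?thesis unfolding P_def using s by auto
      qed
      have hsS: "hs x \<in> S" and hsmin: "wsum (\<lambda>y. w y x) (L (hs x)) = minover S L (\<lambda>y. w y x)" for x
      proof -
        have "P (LEAST i. P i x) x" by (rule LeastI_ex[OF exP])
        then show "hs x \<in> S" and "wsum (\<lambda>y. w y x) (L (hs x)) = minover S L (\<lambda>y. w y x)"
          unfolding P_def hs_def using ss minover_le[OF finS, of _ L "\<lambda>y. w y x"]
          by (auto intro: antisym)
      qed
      have Pm: "(\<lambda>x. P i x) \<in> measurable MX (count_space UNIV)" for i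
      proof -
        have f1[measurable]: "(\<lambda>x. wsum (\<lambda>y. w y x) (L (ss ! i))) \<in> borel_measurable MX"
          by (rule wsum_meas[OF wm])
        have f2[measurable]: "(\<lambda>x. minover S L (\<lambda>y. w y x)) \<in> borel_measurable MX"
          by (rule minover_meas[OF wm finS])
        show ?thesis unfolding P_def by measurable
      qed
      have hsm: "hs \<in> borel_measurable MX"
      proof -
        have "(\<lambda>x. LEAST i. P i x) \<in> measurable MX (count_space UNIV)"
          by (rule measurable_Least[OF Pm])
        from measurable_compose[OF this, of "\<lambda>i. ss ! i" borel] show ?thesis
          unfolding hs_def by simp
      qed
      have INFL_le: "(INF h'\<in>borel_measurable MX. exp_loss L D h') \<le> IL"
      proof (rule INF_lower2[OF hsm])
        show "exp_loss L D hs \<le> IL" unfolding ELf[OF hsm] IL_def hsmin ..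
      qed
      have bnd: "(\<integral>\<^sup>+z. ennreal (F (snd z)) \<partial>D) < \<infinity>" for F :: "'y \<Rightarrow> real"
      proof -
        have "(\<integral>\<^sup>+z. ennreal (F (snd z)) \<partial>D) \<le> (\<integral>\<^sup>+z. ennreal (\<Sum>y\<in>UNIV. \<bar>F y\<bar>) \<partial>D)"
        proof (intro nn_integral_mono ennreal_leI)
          fix z :: "'x \<times> 'y"
          have "F (snd z) \<le> \<bar>F (snd z)\<bar>" by simp
          also have "\<dots> \<le> (\<Sum>y\<in>UNIV. \<bar>F y\<bar>)" by (intro member_le_sum) auto
          finally show "F (snd z) \<le> (\<Sum>y\<in>UNIV. \<bar>F y\<bar>)" .
        qed
        also have "\<dots> = ennreal (\<Sum>y\<in>UNIV. \<bar>F y\<bar>)" using prob_space.emeasure_space_1[OF pD] by simp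
        also have "\<dots> < \<infinity>" by simp
        finally show ?thesis .
      qed
      have Il_fin: "Il < \<infinity>"
      proof -
        fix r0 :: 'r
        have m0: "(\<lambda>x. r0) \<in> measurable MX (count_space UNIV)" by simp
        have "Il \<le> exp_loss ell D (\<lambda>x. r0)" using Il_le INF_lower[OF m0] by (rule order_trans)
        also have "\<dots> < \<infinity>" unfolding exp_loss_def using bnd[of "ell r0"] by simp
        finally show ?thesis .
      qed
      have IL_fin: "IL < \<infinity>"
      proof -
        obtain s0 where s0: "s0 \<in> S" using neS by blast
        have m0: "(\<lambda>x. s0) \<in> borel_measurable MX" by simp
        have "IL \<le> exp_loss L D (\<lambda>x. s0)" unfolding ELf[OF m0] IL_def
          by (intro nn_integral_mono ennreal_leI minover_le[OF finS s0])
        also have "\<dots> < \<infinity>" unfolding exp_loss_def using bnd[of "L s0"] by simp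
        finally show ?thesis .
      qed
      define El where "El = exp_loss ell D (\<psi> \<circ> h)"
      define EL where "EL = exp_loss L D h"
      define f where "f z = ennreal (ell ((\<psi> \<circ> h) (fst z)) (snd z))" for z
      define Gs where "Gs = {g. simple_function D g \<and> g \<le> f}"
      have El_eq: "El = (SUP g\<in>Gs. integral\<^sup>S D g)"
        unfolding El_def exp_loss_def Gs_def f_def nn_integral_def ..
      have Gs_ne: "Gs \<noteq> {}"
      proof -
        have "(\<lambda>z. 0) \<in> Gs" unfolding Gs_def by (auto simp: le_fun_def)
        then show ?thesis by blast
      qed
      have ELf': "EL = (\<integral>\<^sup>+x. ennreal (wsum (\<lambda>y. w y x) (L (h x))) \<partial>\<nu>)" unfolding EL_def by (rule ELf[OF h])
      have wLm: "(\<lambda>x. wsum (\<lambda>y. w y x) (L (h x))) \<in> borel_measurable \<nu>"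
      proof -
        have "(\<lambda>x. L (h x) y) \<in> borel_measurable MX" for y using measurable_compose[OF h Lm] by simp
        then have "(\<lambda>x. \<Sum>y\<in>UNIV. w y x * L (h x) y) \<in> borel_measurable MX"
          using wm by (intro borel_measurable_sum borel_measurable_times) auto
        then show ?thesis unfolding wsum_def m\<nu> .
      qed
      have key: "integral\<^sup>S D g + ennreal c * IL \<le> Il + ennreal c * EL" if g: "g \<in> Gs" for g
      proof -
        have sg: "simple_function D g" and gf: "g \<le> f" using g unfolding Gs_def by auto
        have gm: "g \<in> borel_measurable (MX \<Otimes>\<^sub>M count_space UNIV)"
          using borel_measurable_simple_function[OF sg] unfolding mD .
        have gy: "(\<lambda>x. g (x, y)) \<in> borel_measurable \<nu>" for y
        proof -
          have "(\<lambda>x. (x, y)) \<in> measurable MX (MX \<Otimes>\<^sub>M count_space UNIV)"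
            by (intro measurable_Pair measurable_ident_sets measurable_const) auto
          from measurable_compose[OF this gm] show ?thesis unfolding m\<nu> .
        qed
        define G1 where "G1 x = (\<Sum>y\<in>UNIV. ennreal (w y x) * g (x, y))" for x
        have G1m: "G1 \<in> borel_measurable \<nu>" unfolding G1_def
          using wm' gy by (intro borel_measurable_sum borel_measurable_times_ennreal) auto
        have "integral\<^sup>S D g = (\<integral>\<^sup>+z. g z \<partial>D)" by (rule nn_integral_eq_simple_integral[OF sg, symmetric])
        also have "\<dots> = (\<integral>\<^sup>+x. G1 x \<partial>\<nu>)" unfolding G1_def by (rule decf[OF gm])
        finally have e1: "integral\<^sup>S D g = (\<integral>\<^sup>+x. G1 x \<partial>\<nu>)" .
        have "integral\<^sup>S D g + ennreal c * IL = (\<integral>\<^sup>+x. G1 x + ennreal c * ennreal (minover S L (\<lambda>y. w y x)) \<partial>\<nu>)"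
          unfolding e1 IL_def using G1m Lminm
          by (simp add: nn_integral_add nn_integral_cmult)
        also have "\<dots> \<le> (\<integral>\<^sup>+x. ennreal (minover UNIV ell (\<lambda>y. w y x)) + ennreal c * ennreal (wsum (\<lambda>y. w y x) (L (h x))) \<partial>\<nu>)"
        proof (intro nn_integral_mono)
          fix x
          define a where "a = wsum (\<lambda>y. w y x) (ell (\<psi> (h x)))"
          have a_nn: "0 \<le> a" unfolding a_def by (intro wsum_nn wnn nnell)
          have "G1 x \<le> (\<Sum>y\<in>UNIV. ennreal (w y x) * ennreal (ell (\<psi> (h x)) y))"
            unfolding G1_def
          proof (intro sum_mono mult_left_mono)
            fix y
            show "g (x, y) \<le> ennreal (ell (\<psi> (h x)) y)" using le_funD[OF gf, of "(x, y)"] by (simp add: f_def)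
          qed simp
          also have "\<dots> = (\<Sum>y\<in>UNIV. ennreal (w y x * ell (\<psi> (h x)) y))"
            by (intro sum.cong refl ennreal_mult[symmetric] wnn nnell)
          also have "\<dots> = ennreal a"
            unfolding a_def wsum_def by (intro sum_ennreal mult_nonneg_nonneg wnn nnell)
          finally have G1a: "G1 x \<le> ennreal a" .
          have hx: "a + c * minover S L (\<lambda>y. w y x) \<le> minover UNIV ell (\<lambda>y. w y x) + c * wsum (\<lambda>y. w y x) (L (h x))"
            unfolding a_def by (rule hom) (rule wnn)
          have wL_nn: "0 \<le> wsum (\<lambda>y. w y x) (L (h x))" by (intro wsum_nn wnn nnL)
          have "G1 x + ennreal c * ennreal (minover S L (\<lambda>y. w y x)) \<le> ennreal a + ennreal c * ennreal (minover S L (\<lambda>y. w y x))"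
            using G1a by (rule add_right_mono)
          also have "\<dots> = ennreal (a + c * minover S L (\<lambda>y. w y x))"
            using a_nn c Lmin_nn[of x] by (simp add: ennreal_mult')
          also have "\<dots> \<le> ennreal (minover UNIV ell (\<lambda>y. w y x) + c * wsum (\<lambda>y. w y x) (L (h x)))"
            using hx by (rule ennreal_leI)
          also have "\<dots> = ennreal (minover UNIV ell (\<lambda>y. w y x)) + ennreal c * ennreal (wsum (\<lambda>y. w y x) (L (h x)))"
            using emin_nn[of x] c wL_nn by (simp add: ennreal_mult')
          finally show "G1 x + ennreal c * ennreal (minover S L (\<lambda>y. w y x))
              \<le> ennreal (minover UNIV ell (\<lambda>y. w y x)) + ennreal c * ennreal (wsum (\<lambda>y. w y x) (L (h x)))" .
        qed
        also have "\<dots> = Il + ennreal c * EL"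
          unfolding Il_def ELf' using eminm wLm
          by (simp add: nn_integral_add nn_integral_cmult)
        finally show ?thesis .
      qed
      have main: "El + ennreal c * IL \<le> Il + ennreal c * EL"
      proof -
        have "El + ennreal c * IL = (SUP g\<in>Gs. integral\<^sup>S D g + ennreal c * IL)"
          unfolding El_eq by (rule ennreal_SUP_add_left[OF Gs_ne, symmetric])
        also have "\<dots> \<le> Il + ennreal c * EL" by (rule SUP_least) (rule key)
        finally show ?thesis .
      qed
      have "El - (INF h'\<in>measurable MX (count_space UNIV). exp_loss ell D h')
          \<le> ennreal c * (EL - (INF h'\<in>borel_measurable MX. exp_loss L D h'))"
        by (rule ennreal_final[OF c main Il_le INFL_le Il_fin IL_fin])
      then show "regret MX (count_space UNIV) ell D (\<psi> \<circ> h) \<le> ennreal c * regret MX borel L D h"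
        unfolding regret_def El_def EL_def .
    qed
  qed
qed

end
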